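(* There exists no ideal test, i.e., no test that is ideal with respect to the set $F$ of all forecasting strategies.
   Context: Let $\Omega=\{0,1\}$, $\Omega^\infty$ the set of infinite sequences $\omega=(\omega_1,\omega_2,\dots)$, and $\omega^t=(\omega_1,\dots,\omega_t)$ (also used for the cylinder set of all sequences with this prefix; $\omega^0=\emptyset$). $\mathcal G_t$ is the $\sigma$-algebra generated by the length-$t$ cylinders and $\mathcal G_\infty$ the $\sigma$-algebra generated by all cylinders. $\Delta(\Omega)$ is the set of probability distributions on $\Omega$; for $p\in\Delta(\Omega)$ and $x\in\Omega$, $p[x]$ is the probability of $x$. A forecasting strategy is a map $f:\bigcup_{t\ge0}(\Omega\times\Delta(\Omega)\times\Delta(\Omega))^t\to\Delta(\Omega)$; $F$ is the set of all forecasting strategies. Given an ordered pair $\vec f=(f,g)\in F\times F$ and $\omega\in\Omega^\infty$, the play path $(\omega,\vec f)$ is defined recursively: $(\omega,\vec f)^0=\emptyset$ and its $t$-th entry is $(\omega_t,f((\omega,\vec f)^{t-1}),g((\omega,\vec f)^{t-1}))$. The pair $\vec f$ induces two probability measures on $(\Omega^\infty,\mathcal G_\infty)$, again denoted $f$ and $g$, determined by $f(\omega^t)=\prod_{n=1}^t f((\omega,\vec f)^{n-1})[\omega_n]$ and $g(\omega^t)=\prod_{n=1}^t g((\omega,\vec f)^{n-1})[\omega_n]$. A (cardinal comparison) test is a sequence $T=(T_t)_{t>0}$ of $\mathcal G_t$-measurable functions $T_t:(\Omega\times\Delta(\Omega)\times\Delta(\Omega))^\infty\to[0,1]$; write $T_t(\omega,\vec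 f)=T_t((\omega,\vec f))$. Let $A^{\vec f}_{T,f}=\{\omega: T_t(\omega,\vec f)\to1\}$ and $A^{\vec f}_{T,g}=\{\omega: T_t(\omega,\vec f)\to0\}$. A test $T$ is ideal with respect to $A\subseteq F$ if for all $f,g\in A$ with $g\ne f$, writing $\vec f=(f,g)$, $f(A^{\vec f}_{T,f})=g(A^{\vec f}_{T,g})=1$ (measures induced by $\vec f$). $T$ is ideal if it is ideal with respect to $F$. *)

theory Defs
  imports "HOL-Probability.Probability"
begin

text \<open>Omega = bool; Delta(Omega) = bool pmf; p[x] = pmf p x.
  An entry of a play path is (omega_t, forecast of f, forecast of g).\<close>

type_synonym entry = "bool \<times> bool pmf \<times> bool pmf"

type_synonym strategy = "entry list \<Rightarrow> bool pmf"

text \<open>Prefix of length t of the play path (omega, (f,g)); sequences omega are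
  0-indexed, so omega n is the (n+1)-th outcome.\<close>
fun hist :: "(nat \<Rightarrow> bool) \<Rightarrow> strategy \<Rightarrow> strategy \<Rightarrow> nat \<Rightarrow> entry list" where
  "hist \<omega> f g 0 = []"
| "hist \<omega> f g (Suc n) =
     hist \<omega> f g n @ [(\<omega> n, f (hist \<omega> f g n), g (hist \<omega> f g n))]"

definition seq_space :: "(nat \<Rightarrow> bool) measure" where
  "seq_space = PiM UNIV (\<lambda>_. count_space UNIV)"

definition cyl :: "(nat \<Rightarrow> bool) \<Rightarrow> nat \<Rightarrow> (nat \<Rightarrow> bool) set" where
  "cyl \<omega> t = {\<omega>'. \<forall>i<t. \<omega>' i = \<omega> i}"

text \<open>M is the probability measure induced by the pair (f,g) using the
  forecasts of p (p = f or p = g):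
  M(omega^t) = prod_{n<t} p((omega,(f,g))^n)[omega_{n+1}].\<close>
definition induced :: "strategy \<Rightarrow> strategy \<Rightarrow> strategy \<Rightarrow> (nat \<Rightarrow> bool) measure \<Rightarrow> bool" where
  "induced f g p M \<longleftrightarrow> sets M = sets seq_space \<and> prob_space M \<and>
     (\<forall>\<omega> t. emeasure M (cyl \<omega> t) =
        ennreal (\<Prod>n<t. pmf (p (hist \<omega> f g n)) (\<omega> n)))"

text \<open>A test: T t applied to the length-t prefix of the play path (G_t-measurability),
  with values in [0,1].\<close>
definition is_test :: "(nat \<Rightarrow> entry list \<Rightarrow> real) \<Rightarrow> bool" where
  "is_test T \<longleftrightarrow> (\<forall>t h. 0 \<le> T t h \<and> T t h \<le> 1)"

definition A_f :: "(nat \<Rightarrow> entry list \<Rightarrow> real) \<Rightarrow> strategy \<Rightarrow> strategy \<Rightarrow> (nat \<Rightarrow> bool) set" where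
  "A_f T f g = {\<omega>. (\<lambda>t. T t (hist \<omega> f g t)) \<longlonglongrightarrow> 1}"

definition A_g :: "(nat \<Rightarrow> entry list \<Rightarrow> real) \<Rightarrow> strategy \<Rightarrow> strategy \<Rightarrow> (nat \<Rightarrow> bool) set" where
  "A_g T f g = {\<omega>. (\<lambda>t. T t (hist \<omega> f g t)) \<longlonglongrightarrow> 0}"

definition ideal_wrt :: "strategy set \<Rightarrow> (nat \<Rightarrow> entry list \<Rightarrow> real) \<Rightarrow> bool" where
  "ideal_wrt S T \<longleftrightarrow> (\<forall>f\<in>S. \<forall>g\<in>S. g \<noteq> f \<longrightarrow>
      (\<forall>M. induced f g f M \<longrightarrow> emeasure M (A_f T f g) = 1) \<and>
      (\<forall>M. induced f g g M \<longrightarrow> emeasure M (A_g T f g) = 1))"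

definition ideal :: "(nat \<Rightarrow> entry list \<Rightarrow> real) \<Rightarrow> bool" where
  "ideal T \<longleftrightarrow> ideal_wrt UNIV T"

end

theory Submission
  imports Defs
begin

definition f0 :: strategy where "f0 = (\<lambda>_. return_pmf False)"
definition g0 :: strategy where
  "g0 = (\<lambda>h. if h \<noteq> [] \<and> fst (snd (hd h)) = return_pmf True then return_pmf True else return_pmf False)"

lemma hist_f0: "\<forall>x\<in>set (hist \<omega> f0 g n). fst (snd x) = return_pmf False"
  by (induction n) (auto simp: f0_def)

lemma g0_hist: "g0 (hist \<omega> f0 g0 n) = f0 (hist \<omega> f0 g0 n)"
proof (cases "hist \<omega> f0 g0 n = []")
  case True
  then show ?thesis by (simp add: g0_def f0_def)
next
  case False
  then have "hd (hist \<omega> f0 g0 n) \<in> set (hist \<omega> f0 g0 n)" by simp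
  then have "fst (snd (hd (hist \<omega> f0 g0 n))) = return_pmf False" using hist_f0 by blast
  moreover have "return_pmf False \<noteq> return_pmf True" by simp
  ultimately show ?thesis unfolding g0_def f0_def by simp
qed

lemma g0_ne: "g0 \<noteq> f0"
proof
  assume "g0 = f0"
  then have "g0 [(True, return_pmf True, return_pmf True)] = f0 [(True, return_pmf True, return_pmf True)]" by simp
  then show False by (simp add: g0_def f0_def)
qed

lemma cyl_sets: "cyl \<omega> t \<in> sets seq_space"
proof -
  have "Measurable.pred seq_space (\<lambda>\<omega>'. \<forall>i<t. \<omega>' i = \<omega> i)"
    unfolding seq_space_def by measurable
  moreover have "space seq_space = UNIV" unfolding seq_space_def by (simp add: space_PiM)
  ultimately show ?thesis unfolding cyl_def pred_def by simp
qed

definition M0 where "M0 = return seq_space (\<lambda>_. False)"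

lemma M0_induced: "induced f0 g0 f0 M0"
proof -
  have sp: "space seq_space = UNIV" unfolding seq_space_def by (simp add: space_PiM)
  have "prob_space M0" unfolding M0_def by (rule prob_space_return) (simp add: sp)
  moreover have "emeasure M0 (cyl \<omega> t) = ennreal (\<Prod>n<t. pmf (f0 (hist \<omega> f0 g0 n)) (\<omega> n))" for \<omega> t
  proof -
    have "emeasure M0 (cyl \<omega> t) = indicator (cyl \<omega> t) (\<lambda>_. False)"
      unfolding M0_def using cyl_sets by (simp add: emeasure_return)
    moreover have "(\<Prod>n<t. pmf (f0 (hist \<omega> f0 g0 n)) (\<omega> n)) = (if \<forall>i<t. \<omega> i = False then 1 else 0)"
      by (induction t) (auto simp: f0_def pmf_return less_Suc_eq)
    ultimately show ?thesis by (auto simp: cyl_def indicator_def)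
  qed
  moreover have "sets M0 = sets seq_space" unfolding M0_def by (rule sets_return)
  ultimately show ?thesis unfolding induced_def by blast
qed

theorem mainTheorem11:
  shows "\<not> (\<exists>T. is_test T \<and> ideal T)"
proof
  assume "\<exists>T. is_test T \<and> ideal T"
  then obtain T where "ideal T" by blast
  then have h: "(\<forall>M. induced f0 g0 f0 M \<longrightarrow> emeasure M (A_f T f0 g0) = 1) \<and>
      (\<forall>M. induced f0 g0 g0 M \<longrightarrow> emeasure M (A_g T f0 g0) = 1)"
    using g0_ne unfolding ideal_def ideal_wrt_def by blast
  have ig: "induced f0 g0 g0 M0" using M0_induced unfolding induced_def g0_hist .
  have 1: "emeasure M0 (A_f T f0 g0) = 1" using h M0_induced by blast
  have 2: "emeasure M0 (A_g T f0 g0) = 1" using h ig by blast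
  have s1: "A_f T f0 g0 \<in> sets M0" using 1 emeasure_notin_sets by fastforce
  have s2: "A_g T f0 g0 \<in> sets M0" using 2 emeasure_notin_sets by fastforce
  have "(\<lambda>_. False) \<in> A_f T f0 g0" using 1 s1 unfolding M0_def
    by (simp add: emeasure_return indicator_def split: if_splits)
  moreover have "(\<lambda>_. False) \<in> A_g T f0 g0" using 2 s2 unfolding M0_def
    by (simp add: emeasure_return indicator_def split: if_splits)
  ultimately show False unfolding A_f_def A_g_def using LIMSEQ_unique by fastforce
qed

end
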